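(* Let $N\ge 2$ and $T\ge 1$, let $U$ be any unitary on the Hilbert space with orthonormal basis $\{|z;i\rangle: z,i\ge 0 \text{ integers}\}$, and let $S\subseteq\{0,1\}^N$ be the set of non-decreasing bit strings $x$ with $x_{N-1}=1$, with $f(x)=\min\{i: x_i=1\}$. For $x\in S$ and $j\ge 0$ let $|\psi_x^j\rangle=(UO_x)^jU|0\rangle$, where $O_x|z;i\rangle=(-1)^{x_i}|z;i\rangle$ for $0\le i<N$ and $O_x|z;i\rangle=|z;i\rangle$ for $i\ge N$. Define the weight $\omega(x,y)=\frac{1}{f(y)-f(x)}$ if $0\le f(x)<f(y)<N$ and $\omega(x,y)=0$ otherwise, and $$W_j=\sum_{x,y\in S}\omega(x,y)\,\langle\psi_x^j|\psi_y^j\rangle.$$ Then for every $j$ with $0\le j<T$, $|W_j-W_{j+1}|\le \pi N$. *)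

theory Defs
  imports "HOL-Analysis.Analysis"
begin

text \<open>Vectors of the Hilbert space l2 over the orthonormal basis |z;i>, indexed by pairs (z,i) of naturals.\<close>
type_synonym vec = "nat \<times> nat \<Rightarrow> complex"

definition ell2 :: "vec set" where
  "ell2 = {v. (\<lambda>k. (cmod (v k))\<^sup>2) summable_on UNIV}"

definition cinner :: "vec \<Rightarrow> vec \<Rightarrow> complex" where
  "cinner v w = infsum (\<lambda>k. cnj (v k) * w k) UNIV"

definition unitary_op :: "(vec \<Rightarrow> vec) \<Rightarrow> bool" where
  "unitary_op U \<longleftrightarrow>
     (\<forall>v\<in>ell2. U v \<in> ell2) \<and>
     (\<forall>v\<in>ell2. \<forall>w\<in>ell2. U (\<lambda>k. v k + w k) = (\<lambda>k. U v k + U w k)) \<and>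
     (\<forall>c. \<forall>v\<in>ell2. U (\<lambda>k. c * v k) = (\<lambda>k. c * U v k)) \<and>
     (\<forall>v\<in>ell2. \<forall>w\<in>ell2. cinner (U v) (U w) = cinner v w) \<and>
     U ` ell2 = ell2"

definition ket0 :: vec where
  "ket0 = (\<lambda>k. if k = (0, 0) then 1 else 0)"

text \<open>Bit strings of length N are lists; x ! i is the bit x_i.\<close>
definition Sset :: "nat \<Rightarrow> bool list set" where
  "Sset N = {x. length x = N \<and> sorted x \<and> x ! (N - 1)}"

definition fpos :: "bool list \<Rightarrow> nat" where
  "fpos x = (LEAST i. i < length x \<and> x ! i)"

definition Ox :: "bool list \<Rightarrow> vec \<Rightarrow> vec" where
  "Ox x v = (\<lambda>(z, i). if i < length x \<and> x ! i then - v (z, i) else v (z, i))"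

definition psi :: "(vec \<Rightarrow> vec) \<Rightarrow> bool list \<Rightarrow> nat \<Rightarrow> vec" where
  "psi U x j = ((U \<circ> Ox x) ^^ j) (U ket0)"

definition omega :: "nat \<Rightarrow> bool list \<Rightarrow> bool list \<Rightarrow> real" where
  "omega N x y = (if fpos x < fpos y \<and> fpos y < N then 1 / real (fpos y - fpos x) else 0)"

definition Wj :: "(vec \<Rightarrow> vec) \<Rightarrow> nat \<Rightarrow> nat \<Rightarrow> complex" where
  "Wj U N j = (\<Sum>x\<in>Sset N. \<Sum>y\<in>Sset N. of_real (omega N x y) * cinner (psi U x j) (psi U y j))"

end

theory Submission
  imports Defs
begin


definition gg :: "real \<Rightarrow> real \<Rightarrow> real" where
  "gg c t = 1 / ((c + t) * sqrt t)"

definition FF :: "real \<Rightarrow> real \<Rightarrow> real" where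
  "FF c t = 2 / sqrt c * arctan (sqrt t / sqrt c)"

definition dd :: "real \<Rightarrow> real \<Rightarrow> real" where
  "dd c m = - (3 * m + c) / (2 * (c + m)^2 * m * sqrt m)"

lemma tangent_poly:
  fixes u v c :: real
  assumes "u > 0" "v > 0" "c > 0"
  shows "1 / ((c + u^2) * u) \<ge> 1 / ((c + v^2) * v) + (- (3 * v^2 + c) / (2 * (c + v^2)^2 * v^2 * v)) * (u^2 - v^2)"
proof -
  define R where "R = 2 * v * c^2 + 4 * v^3 * c + 2 * v^5 + u * c^2 + 3 * u * v^2 * c + 4 * u * v^4 + 2 * u^2 * v * c + 6 * u^2 * v^3 + u^3 * c + 3 * u^3 * v^2"
  have R0: "R \<ge> 0" unfolding R_def using assms by simp
  define Q where "Q = 2 * (c + v^2)^2 * v^3 - 2 * (c + u^2) * u * (c + v^2) * v^2 + (3 * v^2 + c) * (u^2 - v^2) * (c + u^2) * u"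
  have pos: "c + u^2 > 0" "c + v^2 > 0" using assms by (auto intro: add_pos_nonneg)
  have QR: "Q = (u - v)^2 * R" unfolding Q_def R_def by algebra
  have gen: "\<And>A B::real. A > 0 \<Longrightarrow> B > 0 \<Longrightarrow> 1 / (A * u) - (1 / (B * v) + (- (3 * v^2 + c) / (2 * B^2 * v^2 * v)) * (u^2 - v^2))
     = (2 * B^2 * v^3 - 2 * A * u * B * v^2 + (3 * v^2 + c) * (u^2 - v^2) * A * u) / (2 * A * u * B^2 * v^3)"
    using assms by (simp add: field_simps) algebra
  have eq: "1 / ((c + u^2) * u) - (1 / ((c + v^2) * v) + (- (3 * v^2 + c) / (2 * (c + v^2)^2 * v^2 * v)) * (u^2 - v^2))
     = Q / (2 * (c + u^2) * u * (c + v^2)^2 * v^3)"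
    using gen[OF pos] unfolding Q_def by simp
  have "(u - v)^2 * R / (2 * (c + u^2) * u * (c + v^2)^2 * v^3) \<ge> 0"
    using assms R0 by simp
  then show ?thesis using eq unfolding QR[symmetric] by linarith
qed

lemma tangent:
  assumes "t > 0" "m > 0" "c > 0"
  shows "gg c t \<ge> gg c m + dd c m * (t - m)"
proof -
  have u: "sqrt t > 0" "(sqrt t)^2 = t" using assms by auto
  have v: "sqrt m > 0" "(sqrt m)^2 = m" using assms by auto
  have "1 / ((c + (sqrt t)^2) * sqrt t) \<ge> 1 / ((c + (sqrt m)^2) * sqrt m) + (- (3 * (sqrt m)^2 + c) / (2 * (c + (sqrt m)^2)^2 * (sqrt m)^2 * sqrt m)) * ((sqrt t)^2 - (sqrt m)^2)"
    by (rule tangent_poly) (use u v assms in auto)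
  then show ?thesis unfolding gg_def dd_def u(2) v(2) .
qed

lemma FF_deriv:
  assumes "t > 0" "c > 0"
  shows "(FF c has_real_derivative gg c t) (at t)"
proof -
  have e1: "(sqrt t / sqrt c)^2 = t / c" using assms by (simp add: power_divide)
  have e2: "sqrt c * sqrt c = c" using assms by simp
  have e3: "inverse (1 + t/c) = c / (c+t)" using assms by (simp add: field_simps)
  have "(FF c has_real_derivative gg c t) (at t)"
    unfolding FF_def using assms apply (auto intro!: derivative_eq_intros)
    apply (simp add: gg_def e1)
    apply (subst mult.assoc[of _ _ "sqrt c"])
    apply (subst mult.assoc[of _ "sqrt c" "sqrt c"])
    apply (simp only: e2)
    apply (simp add: e3)
    apply (simp add: field_simps)
    done
  then show ?thesis .
qed

lemma FF_cont: "c > 0 \<Longrightarrow> continuous_on A (FF c)"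
  unfolding FF_def by (intro continuous_intros) auto

lemma midpoint:
  assumes "m \<ge> 1/2" "c > 0"
  shows "gg c m \<le> FF c (m + 1/2) - FF c (m - 1/2)"
proof -
  define phi where "phi t = FF c t - gg c m * t - dd c m * (t - m)^2 / 2" for t
  have "phi (m - 1/2) \<le> phi (m + 1/2)"
  proof (rule DERIV_nonneg_imp_increasing_open[where f=phi])
    fix t assume t: "m - 1/2 < t" "t < m + 1/2"
    have "(phi has_real_derivative (gg c t - gg c m - dd c m * (t - m))) (at t)"
      unfolding phi_def using t assms
      by (auto intro!: derivative_eq_intros FF_deriv)
    moreover have "gg c t - gg c m - dd c m * (t - m) \<ge> 0"
      using tangent[of t m c] t assms by simp
    ultimately show "\<exists>y. (phi has_real_derivative y) (at t) \<and> 0 \<le> y" by blast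
  next
    show "continuous_on {m - 1/2..m + 1/2} phi"
      unfolding phi_def using assms by (intro continuous_intros FF_cont) auto
  qed simp
  then show ?thesis unfolding phi_def by (simp add: algebra_simps power2_eq_square)
qed

lemma hilbert_row:
  fixes p :: nat and M :: nat
  shows "(\<Sum>q<M. sqrt ((real p + 1/2) / (real q + 1/2)) / (real p + real q + 1)) \<le> pi"
proof -
  define c where "c = real p + 1/2"
  have c: "c > 0" unfolding c_def by simp
  have "(\<Sum>q<M. sqrt ((real p + 1/2) / (real q + 1/2)) / (real p + real q + 1))
      = (\<Sum>q<M. sqrt c * gg c (real q + 1/2))"
  proof (rule sum.cong)
    fix q assume "q \<in> {..<M}"
    have "sqrt ((real p + 1/2) / (real q + 1/2)) = sqrt c / sqrt (real q + 1/2)"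
      unfolding c_def by (simp add: real_sqrt_divide)
    moreover have "real p + real q + 1 = c + (real q + 1/2)" unfolding c_def by simp
    ultimately show "sqrt ((real p + 1/2) / (real q + 1/2)) / (real p + real q + 1) = sqrt c * gg c (real q + 1/2)"
      unfolding gg_def by simp
  qed simp
  also have "\<dots> \<le> (\<Sum>q<M. sqrt c * (FF c (real (Suc q)) - FF c (real q)))"
  proof (rule sum_mono)
    fix q assume "q \<in> {..<M}"
    have "gg c (real q + 1/2) \<le> FF c (real q + 1/2 + 1/2) - FF c (real q + 1/2 - 1/2)"
      by (rule midpoint) (use c in auto)
    then show "sqrt c * gg c (real q + 1/2) \<le> sqrt c * (FF c (real (Suc q)) - FF c (real q))"
      using c by (intro mult_left_mono) auto
  qed
  also have "\<dots> = sqrt c * (FF c (real M) - FF c 0)"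
    unfolding sum_distrib_left[symmetric] using sum_lessThan_telescope[of "\<lambda>q. FF c (real q)" M] by simp
  also have "\<dots> = 2 * arctan (sqrt (real M) / sqrt c)"
    using c unfolding FF_def by simp
  also have "\<dots> \<le> pi" using arctan_ubound[of "sqrt (real M) / sqrt c"] by simp
  finally show ?thesis .
qed

definition TT :: "nat \<Rightarrow> nat \<Rightarrow> real" where
  "TT p q = sqrt ((real p + 1/2) / (real q + 1/2)) / (real p + real q + 1)"

lemma TT_nonneg: "TT p q \<ge> 0"
  unfolding TT_def by simp

lemma hilbert_set:
  assumes "finite B"
  shows "(\<Sum>q\<in>B. TT p q) \<le> pi"
proof -
  have "B \<subseteq> {..<Suc (Max B)}" using assms by (auto simp: less_Suc_eq_le)
  then have "(\<Sum>q\<in>B. TT p q) \<le> (\<Sum>q<Suc (Max B). TT p q)"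
    by (intro sum_mono2) (auto simp: TT_nonneg)
  also have "\<dots> \<le> pi" using hilbert_row[of p "Suc (Max B)"] unfolding TT_def .
  finally show ?thesis .
qed

lemma hilbert_inj:
  assumes "finite Y" "inj_on g Y"
  shows "(\<Sum>y\<in>Y. TT p (g y)) \<le> pi"
proof -
  have "(\<Sum>y\<in>Y. TT p (g y)) = (\<Sum>q\<in>g ` Y. TT p q)"
    using assms by (simp add: sum.reindex)
  also have "\<dots> \<le> pi" using assms by (intro hilbert_set) auto
  finally show ?thesis .
qed

lemma amgm:
  fixes a b :: real and m n :: nat
  shows "2 * a * b / (real m + real n + 1) \<le> TT m n * a^2 + TT n m * b^2"
proof -
  define r where "r = sqrt ((real m + 1/2) / (real n + 1/2))"
  have r: "r > 0" unfolding r_def by simp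
  have r': "sqrt ((real n + 1/2) / (real m + 1/2)) = 1 / r"
    unfolding r_def by (simp add: real_sqrt_divide)
  have d: "real m + real n + 1 > 0" by simp
  have "2 * a * b \<le> r * a^2 + b^2 / r"
  proof -
    have "0 \<le> (r * a - b)^2 / r" using r by simp
    also have "\<dots> = r * a^2 + b^2 / r - 2 * a * b"
      using r by (simp add: field_simps power2_eq_square)
    finally show ?thesis by simp
  qed
  then have "2 * a * b / (real m + real n + 1) \<le> (r * a^2 + b^2 / r) / (real m + real n + 1)"
    using d by (simp add: divide_right_mono)
  also have "\<dots> = TT m n * a^2 + TT n m * b^2"
  proof -
    have "real n + real m + 1 = real m + real n + 1" by simp
    then show ?thesis unfolding TT_def r' r_def[symmetric]
      by (simp add: add_divide_distrib)
  qed
  finally show ?thesis .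
qed

lemma core:
  fixes X :: "'a set" and f :: "'a \<Rightarrow> nat" and A :: "'a \<Rightarrow> real" and i :: nat
  assumes X: "finite X" and inj: "inj_on f X"
  shows "(\<Sum>x\<in>X. \<Sum>y\<in>X. if f x \<le> i \<and> i < f y then 2 * A x * A y / real (f y - f x) else 0)
         \<le> pi * (\<Sum>x\<in>X. (A x)^2)"
proof -
  define P1 where "P1 x y = (if f x \<le> i \<and> i < f y then TT (i - f x) (f y - i - 1) * (A x)^2 else 0)" for x y
  define P2 where "P2 x y = (if f x \<le> i \<and> i < f y then TT (f y - i - 1) (i - f x) * (A y)^2 else 0)" for x y
  have step1: "(\<Sum>x\<in>X. \<Sum>y\<in>X. if f x \<le> i \<and> i < f y then 2 * A x * A y / real (f y - f x) else 0)
       \<le> (\<Sum>x\<in>X. \<Sum>y\<in>X. P1 x y + P2 x y)"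
  proof (intro sum_mono)
    fix x y assume "x \<in> X" "y \<in> X"
    show "(if f x \<le> i \<and> i < f y then 2 * A x * A y / real (f y - f x) else 0) \<le> P1 x y + P2 x y"
    proof (cases "f x \<le> i \<and> i < f y")
      case True
      then have "real (f y - f x) = real (i - f x) + real (f y - i - 1) + 1" by auto
      then show ?thesis using True amgm[of "A x" "A y" "i - f x" "f y - i - 1"]
        unfolding P1_def P2_def by simp
    qed (auto simp add: P1_def P2_def)
  qed
  have b1: "(\<Sum>x\<in>X. \<Sum>y\<in>X. P1 x y) \<le> (\<Sum>x\<in>X. if f x \<le> i then pi * (A x)^2 else 0)"
  proof (intro sum_mono)
    fix x assume "x \<in> X"
    show "(\<Sum>y\<in>X. P1 x y) \<le> (if f x \<le> i then pi * (A x)^2 else 0)"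
    proof (cases "f x \<le> i")
      case True
      have "(\<Sum>y\<in>X. P1 x y) = (\<Sum>y\<in>{y\<in>X. i < f y}. TT (i - f x) (f y - i - 1)) * (A x)^2"
        unfolding P1_def using True X by (simp add: sum.inter_filter[symmetric] sum_distrib_right)
      also have "\<dots> \<le> pi * (A x)^2"
      proof (rule mult_right_mono)
        have "inj_on (\<lambda>y. f y - i - 1) {y\<in>X. i < f y}"
          using inj unfolding inj_on_def by auto
        then show "(\<Sum>y\<in>{y\<in>X. i < f y}. TT (i - f x) (f y - i - 1)) \<le> pi"
          using X by (intro hilbert_inj) auto
      qed simp
      finally show ?thesis using True by simp
    qed (simp add: P1_def)
  qed
  have b2: "(\<Sum>x\<in>X. \<Sum>y\<in>X. P2 x y) \<le> (\<Sum>y\<in>X. if i < f y then pi * (A y)^2 else 0)"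
  proof -
    have "(\<Sum>x\<in>X. \<Sum>y\<in>X. P2 x y) = (\<Sum>y\<in>X. \<Sum>x\<in>X. P2 x y)" by (rule sum.swap)
    also have "\<dots> \<le> (\<Sum>y\<in>X. if i < f y then pi * (A y)^2 else 0)"
    proof (intro sum_mono)
      fix y assume "y \<in> X"
      show "(\<Sum>x\<in>X. P2 x y) \<le> (if i < f y then pi * (A y)^2 else 0)"
      proof (cases "i < f y")
        case True
        have "(\<Sum>x\<in>X. P2 x y) = (\<Sum>x\<in>{x\<in>X. f x \<le> i}. TT (f y - i - 1) (i - f x)) * (A y)^2"
          unfolding P2_def using True X by (simp add: sum.inter_filter[symmetric] sum_distrib_right)
        also have "\<dots> \<le> pi * (A y)^2"
        proof (rule mult_right_mono)
          have "inj_on (\<lambda>x. i - f x) {x\<in>X. f x \<le> i}"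
            using inj unfolding inj_on_def by auto
          then show "(\<Sum>x\<in>{x\<in>X. f x \<le> i}. TT (f y - i - 1) (i - f x)) \<le> pi"
            using X by (intro hilbert_inj) auto
        qed simp
        finally show ?thesis using True by simp
      qed (simp add: P2_def)
    qed
    finally show ?thesis .
  qed
  have "(\<Sum>x\<in>X. \<Sum>y\<in>X. P1 x y + P2 x y) = (\<Sum>x\<in>X. \<Sum>y\<in>X. P1 x y) + (\<Sum>x\<in>X. \<Sum>y\<in>X. P2 x y)"
    by (simp add: sum.distrib)
  also have "\<dots> \<le> (\<Sum>x\<in>X. if f x \<le> i then pi * (A x)^2 else 0) + (\<Sum>y\<in>X. if i < f y then pi * (A y)^2 else 0)"
    using b1 b2 by linarith
  also have "\<dots> = pi * (\<Sum>x\<in>X. (A x)^2)"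
    by (simp add: sum.distrib[symmetric] sum_distrib_left) (rule sum.cong; auto)
  finally show ?thesis using step1 by linarith
qed




lemma Sset_bit:
  assumes x: "x \<in> Sset N" and N: "N \<ge> 1" and i: "i < N"
  shows "x ! i \<longleftrightarrow> fpos x \<le> i"
proof -
  have len: "length x = N" and so: "sorted x" and last: "x ! (N - 1)" using x unfolding Sset_def by auto
  have ex: "N - 1 < length x \<and> x ! (N - 1)" using len last N by simp
  have f1: "fpos x < length x \<and> x ! (fpos x)"
    unfolding fpos_def by (rule LeastI[of _ "N - 1"]) (rule ex)
  show ?thesis
  proof
    assume "x ! i"
    then show "fpos x \<le> i" unfolding fpos_def using i len by (intro Least_le) simp
  next
    assume le: "fpos x \<le> i"
    have "x ! (fpos x) \<le> x ! i" using so le i len f1 by (simp add: sorted_iff_nth_mono)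
    then show "x ! i" using f1 by (simp add: le_bool_def)
  qed
qed

lemma Sset_fpos_less:
  assumes x: "x \<in> Sset N" and N: "N \<ge> 1"
  shows "fpos x < N"
proof -
  have "x ! (N - 1)" using x unfolding Sset_def by auto
  then have "fpos x \<le> N - 1" using Sset_bit[OF x N, of "N - 1"] N by simp
  then show ?thesis using N by simp
qed

lemma Sset_inj:
  assumes N: "N \<ge> 1"
  shows "inj_on fpos (Sset N)"
proof (rule inj_onI)
  fix x y assume x: "x \<in> Sset N" and y: "y \<in> Sset N" and eq: "fpos x = fpos y"
  have "length x = N" "length y = N" using x y unfolding Sset_def by auto
  then show "x = y"
    using Sset_bit[OF x N] Sset_bit[OF y N] eq by (intro nth_equalityI) auto
qed

lemma Sset_finite: "finite (Sset N)"
proof -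
  have "Sset N \<subseteq> {xs. set xs \<subseteq> UNIV \<and> length xs = N}" unfolding Sset_def by auto
  then show ?thesis using finite_lists_length_eq[of "UNIV :: bool set" N] finite_subset by auto
qed

lemma Sset_card:
  assumes N: "N \<ge> 1"
  shows "card (Sset N) \<le> N"
proof -
  have "card (Sset N) \<le> card {..<N}"
    by (rule card_inj_on_le[OF Sset_inj[OF N]]) (use Sset_fpos_less[OF _ N] in auto)
  then show ?thesis by simp
qed



lemma ell2_summable: "v \<in> ell2 \<Longrightarrow> (\<lambda>k. (cmod (v k))^2) summable_on UNIV"
  unfolding ell2_def by simp

lemma prod_abs_summable:
  assumes "v \<in> ell2" "w \<in> ell2"
  shows "(\<lambda>k. norm (cnj (v k) * w k)) summable_on UNIV"
proof (rule Infinite_Sum.abs_summable_on_comparison_test)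
  show "(\<lambda>k. norm (((cmod (v k))^2 + (cmod (w k))^2) / 2)) summable_on UNIV"
  proof -
    have "(\<lambda>k. ((cmod (v k))^2 + (cmod (w k))^2) * (1 / 2)) summable_on UNIV"
      using ell2_summable[OF assms(1)] ell2_summable[OF assms(2)]
      by (intro summable_on_cmult_left summable_on_add) auto
    then show ?thesis by simp
  qed
next
  fix k :: "nat \<times> nat"
  have "cmod (v k) * cmod (w k) \<le> ((cmod (v k))^2 + (cmod (w k))^2) / 2"
    using sum_squares_bound[of "cmod (v k)" "cmod (w k)"] by (simp add: field_simps power2_eq_square)
  then show "norm (cnj (v k) * w k) \<le> norm (((cmod (v k))^2 + (cmod (w k))^2) / 2)"
    by (simp add: norm_mult)
qed

lemma prod_summable:
  assumes "v \<in> ell2" "w \<in> ell2"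
  shows "(\<lambda>k. cnj (v k) * w k) summable_on UNIV"
  using prod_abs_summable[OF assms] by (rule abs_summable_summable)

definition sig :: "bool list \<Rightarrow> nat \<times> nat \<Rightarrow> complex" where
  "sig x k = (if snd k < length x \<and> x ! snd k then -1 else 1)"

lemma Ox_sig: "Ox x v k = sig x k * v k"
  unfolding Ox_def sig_def by (cases k) auto

lemma cmod_sig[simp]: "cmod (sig x k) = 1"
  unfolding sig_def by auto

lemma cnj_sig[simp]: "cnj (sig x k) = sig x k"
  unfolding sig_def by auto

lemma sig_sq[simp]: "sig x k * sig x k = 1"
  unfolding sig_def by auto

lemma Ox_ell2: "v \<in> ell2 \<Longrightarrow> Ox x v \<in> ell2"
  unfolding ell2_def by (simp add: Ox_sig norm_mult)

lemma ket0_ell2: "ket0 \<in> ell2"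
proof -
  have "(\<lambda>k. (cmod (ket0 k))^2) summable_on {(0,0)}" by simp
  then have "(\<lambda>k. (cmod (ket0 k))^2) summable_on UNIV"
    by (subst summable_on_cong_neutral[where T="{(0,0)}" and g="\<lambda>k. (cmod (ket0 k))^2"])
       (auto simp: ket0_def)
  then show ?thesis unfolding ell2_def by simp
qed

lemma psi_ell2:
  assumes "unitary_op U"
  shows "psi U x j \<in> ell2"
proof (induction j)
  case 0
  then show ?case using assms ket0_ell2 unfolding unitary_op_def psi_def by simp
next
  case (Suc j)
  then show ?case using assms Ox_ell2 unfolding unitary_op_def psi_def by simp
qed

lemma psi_Suc: "psi U x (Suc j) = U (Ox x (psi U x j))"
  unfolding psi_def by simp

lemma cinner_ket0: "cinner ket0 ket0 = 1"
proof -
  have "cinner ket0 ket0 = infsum (\<lambda>k. cnj (ket0 k) * ket0 k) {(0,0)}"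
    unfolding cinner_def by (rule infsum_cong_neutral) (auto simp: ket0_def)
  then show ?thesis by (simp add: ket0_def)
qed

lemma cinner_Ox: "cinner (Ox x v) (Ox x v) = cinner v v"
proof -
  have "cnj (sig x k * v k) * (sig x k * v k) = cnj (v k) * v k" for k
  proof -
    have "cnj (sig x k * v k) * (sig x k * v k) = (sig x k * sig x k) * (cnj (v k) * v k)"
      by (simp only: complex_cnj_mult cnj_sig mult_ac)
    then show ?thesis by simp
  qed
  then show ?thesis unfolding cinner_def Ox_sig by (intro infsum_cong)
qed

lemma cinner_psi:
  assumes "unitary_op U"
  shows "cinner (psi U x j) (psi U x j) = 1"
proof (induction j)
  case 0
  then show ?case using assms ket0_ell2 cinner_ket0 unfolding unitary_op_def psi_def by simp
next
  case (Suc j)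
  have "psi U x j \<in> ell2" by (rule psi_ell2[OF assms])
  then have "Ox x (psi U x j) \<in> ell2" by (rule Ox_ell2)
  then show ?case using assms Suc cinner_Ox unfolding unitary_op_def psi_Suc by simp
qed

lemma norm_sq_psi:
  assumes "unitary_op U"
  shows "infsum (\<lambda>k. (cmod (psi U x j k))^2) UNIV = 1"
proof -
  let ?v = "psi U x j"
  have s: "(\<lambda>k. (cmod (?v k))^2) summable_on UNIV" using ell2_summable psi_ell2[OF assms] by blast
  have "((\<lambda>k. complex_of_real ((cmod (?v k))^2)) has_sum complex_of_real (infsum (\<lambda>k. (cmod (?v k))^2) UNIV)) UNIV"
    using s by (intro has_sum_of_real) simp
  moreover have "(\<lambda>k. complex_of_real ((cmod (?v k))^2)) = (\<lambda>k. cnj (?v k) * ?v k)"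
    by (rule ext) (metis complex_norm_square mult.commute)
  ultimately have "cinner ?v ?v = complex_of_real (infsum (\<lambda>k. (cmod (?v k))^2) UNIV)"
    unfolding cinner_def by (simp add: infsumI)
  then show ?thesis using cinner_psi[OF assms] by simp
qed



lemma infsum_sum':
  fixes f :: "'i \<Rightarrow> 'a \<Rightarrow> complex"
  assumes "finite I" "\<And>a. a \<in> I \<Longrightarrow> f a summable_on A"
  shows "(\<lambda>k. \<Sum>a\<in>I. f a k) summable_on A \<and> infsum (\<lambda>k. \<Sum>a\<in>I. f a k) A = (\<Sum>a\<in>I. infsum (f a) A)"
  using assms
proof (induction I rule: finite_induct)
  case empty
  then show ?case by simp
next
  case (insert x F)
  then have IH: "(\<lambda>k. \<Sum>a\<in>F. f a k) summable_on A" "infsum (\<lambda>k. \<Sum>a\<in>F. f a k) A = (\<Sum>a\<in>F. infsum (f a) A)"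
    by auto
  have fx: "f x summable_on A" using insert by auto
  show ?case using insert.hyps IH fx
    by (simp add: summable_on_add infsum_add)
qed

lemma sig_S:
  assumes x: "x \<in> Sset N" and N: "N \<ge> 1"
  shows "sig x k = (if snd k < N \<and> fpos x \<le> snd k then -1 else 1)"
proof -
  have "length x = N" using x unfolding Sset_def by auto
  then show ?thesis unfolding sig_def using Sset_bit[OF x N] by auto
qed

lemma weight_eq:
  assumes x: "x \<in> Sset N" and y: "y \<in> Sset N" and N: "N \<ge> 1"
  shows "omega N x y * cmod (1 - sig x k * sig y k)
       = (if fpos x \<le> snd k \<and> snd k < fpos y then 2 / real (fpos y - fpos x) else 0)"
proof -
  have fy: "fpos y < N" by (rule Sset_fpos_less[OF y N])
  show ?thesis unfolding sig_S[OF x N] sig_S[OF y N] omega_def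
    using fy by auto
qed

lemma cinner_diff:
  assumes v: "v \<in> ell2" and w: "w \<in> ell2"
  shows "(\<lambda>k. (1 - sig x k * sig y k) * (cnj (v k) * w k)) summable_on UNIV \<and>
    cinner v w - cinner (Ox x v) (Ox y w) = infsum (\<lambda>k. (1 - sig x k * sig y k) * (cnj (v k) * w k)) UNIV"
proof -
  let ?h = "\<lambda>k. cnj (v k) * w k"
  have hs: "?h summable_on UNIV" by (rule prod_summable[OF v w])
  have ha: "(\<lambda>k. norm (?h k)) summable_on UNIV" by (rule prod_abs_summable[OF v w])
  have g: "cnj (Ox x v k) * Ox y w k = sig x k * sig y k * ?h k" for k
    unfolding Ox_sig by (simp add: mult_ac)
  have gs: "(\<lambda>k. sig x k * sig y k * ?h k) summable_on UNIV"
  proof (rule abs_summable_summable)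
    show "(\<lambda>k. norm (sig x k * sig y k * ?h k)) summable_on UNIV"
      by (rule Infinite_Sum.abs_summable_on_comparison_test[OF ha]) (simp add: norm_mult)
  qed
  have ms: "(\<lambda>k. - (sig x k * sig y k * ?h k)) summable_on UNIV"
    using gs by (simp add: summable_on_uminus)
  have eq: "(\<lambda>k. (1 - sig x k * sig y k) * ?h k) = (\<lambda>k. ?h k + - (sig x k * sig y k * ?h k))"
    by (rule ext) (simp add: algebra_simps)
  have "cinner v w - cinner (Ox x v) (Ox y w) = infsum ?h UNIV + infsum (\<lambda>k. - (sig x k * sig y k * ?h k)) UNIV"
    unfolding cinner_def g by (simp add: infsum_uminus)
  also have "\<dots> = infsum (\<lambda>k. (1 - sig x k * sig y k) * ?h k) UNIV"
    unfolding eq by (rule infsum_add[OF hs ms, symmetric])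
  moreover have "(\<lambda>k. ?h k + - (sig x k * sig y k * ?h k)) summable_on UNIV"
    by (rule summable_on_add[OF hs ms])
  ultimately show ?thesis unfolding eq by simp
qed



lemma has_sum_sum':
  fixes f :: "'i \<Rightarrow> 'a \<Rightarrow> 'b::topological_comm_monoid_add"
  assumes "finite I" "\<And>a. a \<in> I \<Longrightarrow> (f a has_sum s a) A"
  shows "((\<lambda>k. \<Sum>a\<in>I. f a k) has_sum (\<Sum>a\<in>I. s a)) A"
  using assms
proof (induction I rule: finite_induct)
  case empty
  then show ?case by simp
next
  case (insert x F)
  then show ?case by (simp add: has_sum_add)
qed

theorem lemma4:
  fixes N T j :: nat and U :: "vec \<Rightarrow> vec"
  assumes "N \<ge> 2" and "T \<ge> 1" and "unitary_op U" and "j < T"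
  shows "cmod (Wj U N j - Wj U N (j + 1)) \<le> pi * real N"
proof -
  have N1: "N \<ge> 1" using assms(1) by simp
  have U: "unitary_op U" by (rule assms(3))
  define S where "S = Sset N"
  have Sfin: "finite S" unfolding S_def by (rule Sset_finite)
  define ps where "ps x = psi U x j" for x
  define ph where "ph x = Ox x (ps x)" for x
  have ps_ell2: "ps x \<in> ell2" for x unfolding ps_def by (rule psi_ell2[OF U])
  have ph_ell2: "ph x \<in> ell2" for x unfolding ph_def by (rule Ox_ell2[OF ps_ell2])
  have Upres: "cinner (U a) (U b) = cinner a b" if "a \<in> ell2" "b \<in> ell2" for a b
    using U that unfolding unitary_op_def by blast
  define H where "H x y k = of_real (omega N x y) * ((1 - sig x k * sig y k) * (cnj (ps x k) * ps y k))" for x y k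
  have Hs: "H x y summable_on UNIV" for x y
    unfolding H_def using cinner_diff[OF ps_ell2 ps_ell2, of x y] by (intro summable_on_cmult_right) blast
  have Hi: "of_real (omega N x y) * (cinner (ps x) (ps y) - cinner (ph x) (ph y)) = infsum (H x y) UNIV" for x y
    unfolding H_def ph_def using cinner_diff[OF ps_ell2 ps_ell2, of x y]
    by (simp add: infsum_cmult_right)
  define F where "F k = (\<Sum>x\<in>S. \<Sum>y\<in>S. H x y k)" for k
  have Fs1: "(\<lambda>k. \<Sum>y\<in>S. H x y k) summable_on UNIV \<and> infsum (\<lambda>k. \<Sum>y\<in>S. H x y k) UNIV = (\<Sum>y\<in>S. infsum (H x y) UNIV)" for x
    using infsum_sum'[OF Sfin, of "H x" UNIV] Hs by blast
  have Fs: "F summable_on UNIV \<and> infsum F UNIV = (\<Sum>x\<in>S. infsum (\<lambda>k. \<Sum>y\<in>S. H x y k) UNIV)"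
    unfolding F_def using infsum_sum'[OF Sfin, of "\<lambda>x k. \<Sum>y\<in>S. H x y k" UNIV] Fs1 by blast
  have Wdiff: "Wj U N j - Wj U N (j + 1) = infsum F UNIV"
  proof -
    have "Wj U N (j + 1) = (\<Sum>x\<in>S. \<Sum>y\<in>S. of_real (omega N x y) * cinner (ph x) (ph y))"
      unfolding Wj_def S_def[symmetric] using Upres[OF ph_ell2 ph_ell2]
      by (simp add: psi_Suc ps_def[symmetric] ph_def[symmetric])
    moreover have "Wj U N j = (\<Sum>x\<in>S. \<Sum>y\<in>S. of_real (omega N x y) * cinner (ps x) (ps y))"
      unfolding Wj_def S_def[symmetric] ps_def ..
    ultimately have "Wj U N j - Wj U N (j + 1) = (\<Sum>x\<in>S. \<Sum>y\<in>S. of_real (omega N x y) * (cinner (ps x) (ps y) - cinner (ph x) (ph y)))"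
      by (simp add: sum_subtractf right_diff_distrib)
    also have "\<dots> = (\<Sum>x\<in>S. \<Sum>y\<in>S. infsum (H x y) UNIV)" by (simp add: Hi)
    also have "\<dots> = infsum F UNIV" using Fs Fs1 by simp
    finally show ?thesis .
  qed
  define G where "G k = pi * (\<Sum>x\<in>S. (cmod (ps x k))^2)" for k
  have Gsum: "(G has_sum (pi * real (card S))) UNIV"
  proof -
    have "((\<lambda>k. (cmod (ps x k))^2) has_sum 1) UNIV" for x
      using norm_sq_psi[OF U, of x j] ell2_summable[OF ps_ell2[of x]] unfolding ps_def
      by (simp add: has_sum_iff)
    then have "((\<lambda>k. \<Sum>x\<in>S. (cmod (ps x k))^2) has_sum (\<Sum>x\<in>S. 1)) UNIV"
      by (intro has_sum_sum' Sfin) auto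
    then show ?thesis unfolding G_def by (intro has_sum_cmult_right) simp
  qed
  have pointwise: "norm (F k) \<le> G k" for k
  proof -
    let ?A = "\<lambda>x. cmod (ps x k)"
    have "norm (F k) \<le> (\<Sum>x\<in>S. \<Sum>y\<in>S. norm (H x y k))"
      unfolding F_def by (rule order_trans[OF norm_sum sum_mono]) (rule norm_sum)
    also have "\<dots> = (\<Sum>x\<in>S. \<Sum>y\<in>S. if fpos x \<le> snd k \<and> snd k < fpos y then 2 * ?A x * ?A y / real (fpos y - fpos x) else 0)"
    proof (intro sum.cong refl)
      fix x y assume x: "x \<in> S" and y: "y \<in> S"
      have om: "omega N x y \<ge> 0" unfolding omega_def by simp
      have "norm (H x y k) = (omega N x y * cmod (1 - sig x k * sig y k)) * ?A x * ?A y"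
        unfolding H_def using om by (simp add: norm_mult)
      then show "norm (H x y k) = (if fpos x \<le> snd k \<and> snd k < fpos y then 2 * ?A x * ?A y / real (fpos y - fpos x) else 0)"
        using weight_eq[OF x[unfolded S_def] y[unfolded S_def] N1, of k] by simp
    qed
    also have "\<dots> \<le> pi * (\<Sum>x\<in>S. (?A x)^2)"
      by (rule core[OF Sfin]) (simp add: S_def Sset_inj[OF N1])
    finally show ?thesis unfolding G_def .
  qed
  have "cmod (infsum F UNIV) \<le> pi * real (card S)"
    by (rule norm_infsum_le[OF has_sum_infsum Gsum]) (use Fs pointwise in auto)
  also have "\<dots> \<le> pi * real N"
    using Sset_card[OF N1] unfolding S_def by simp
  finally show ?thesis unfolding Wdiff .
qed

end
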